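(* Let $n>5$ and let $f$ be a permutation of $V(\overline{C_n})$. Suppose there exist a vertex $v$ and two distinct vertices $u,w$, both different from $v$, such that $v$ is adjacent in $\overline{C_n}$ to neither $u$ nor $w$, while $f(v)$ is adjacent in $\overline{C_n}$ to both $f(u)$ and $f(w)$. Then $\delta_f(\overline{C_n})>4$.
   Context: $C_n$ is the cycle on vertices $v_1,\dots,v_n$ (with $v_i$ adjacent to $v_{i+1}$, indices mod $n$), and $\overline{C_n}$ is its complement: two distinct vertices are adjacent in $\overline{C_n}$ iff they are not adjacent in $C_n$. $d(x,y)$ denotes the distance in $\overline{C_n}$. For a permutation $f$ of the vertex set and distinct vertices $x,y$, $\delta_f(x,y)=|d(x,y)-d(f(x),f(y))|$, and $\delta_f(\overline{C_n})=\sum\delta_f(x,y)$ over all unordered pairs $\{x,y\}$ of distinct vertices. *)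

theory Defs
  imports Main
begin

text \<open>Vertices of C_n are 0..n-1 (v_{i+1} corresponds to i); vertex i is adjacent
  in C_n to (i+1) mod n.\<close>

definition cycle_adj :: "nat \<Rightarrow> nat \<Rightarrow> nat \<Rightarrow> bool" where
  "cycle_adj n x y \<longleftrightarrow> x < n \<and> y < n \<and> ((x + 1) mod n = y \<or> (y + 1) mod n = x)"

definition cocycle_adj :: "nat \<Rightarrow> nat \<Rightarrow> nat \<Rightarrow> bool" where
  "cocycle_adj n x y \<longleftrightarrow> x < n \<and> y < n \<and> x \<noteq> y \<and> \<not> cycle_adj n x y"

definition cowalk :: "nat \<Rightarrow> nat \<Rightarrow> nat \<Rightarrow> nat \<Rightarrow> bool" where
  "cowalk n k x y \<longleftrightarrow> (\<exists>p :: nat list. length p = k + 1 \<and> p ! 0 = x \<and> p ! k = y \<and>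
      (\<forall>i<k. cocycle_adj n (p ! i) (p ! (i + 1))))"

definition codist :: "nat \<Rightarrow> nat \<Rightarrow> nat \<Rightarrow> nat" where
  "codist n x y = (LEAST k. cowalk n k x y)"

definition delta_pair :: "nat \<Rightarrow> (nat \<Rightarrow> nat) \<Rightarrow> nat \<Rightarrow> nat \<Rightarrow> nat" where
  "delta_pair n f x y = nat \<bar>int (codist n x y) - int (codist n (f x) (f y))\<bar>"

definition delta_total :: "nat \<Rightarrow> (nat \<Rightarrow> nat) \<Rightarrow> nat" where
  "delta_total n f = (\<Sum>(x, y) \<in> {(x, y). x < y \<and> y < n}. delta_pair n f x y)"

end

theory Submission
  imports Defs
begin

lemma mod_nb1: "(x::nat) < n \<Longrightarrow> (x + 1) mod n = (if x + 1 = n then 0 else x + 1)"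
proof (cases "x + 1 = n")
  case False
  assume "x < n"
  with False have "x + 1 < n" by linarith
  then show ?thesis by simp
qed simp

lemma cycle_adj_lin: "cycle_adj n x y \<longleftrightarrow> x < n \<and> y < n \<and>
   (y = (if x + 1 = n then 0 else x + 1) \<or> x = (if y + 1 = n then 0 else y + 1))"
  unfolding cycle_adj_def by (auto simp: mod_nb1)

lemma cocycle_sym: "cocycle_adj n x y = cocycle_adj n y x"
  unfolding cocycle_adj_def cycle_adj_def by auto

lemma common_nb:
  assumes "n > 5" "cycle_adj n x y"
  shows "\<exists>z. cocycle_adj n x z \<and> cocycle_adj n z y"
proof (cases "y = (if x + 1 = n then 0 else x + 1)")
  case True
  define z where "z = (if x + 3 < n then x + 3 else x + 3 - n)"
  show ?thesis using assms True
    by (intro exI[of _ z]) (auto simp: z_def cocycle_adj_def cycle_adj_lin split: if_splits)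
next
  case False
  then have x: "x = (if y + 1 = n then 0 else y + 1)" using assms(2) cycle_adj_lin by blast
  define z where "z = (if y + 3 < n then y + 3 else y + 3 - n)"
  show ?thesis using assms x
    by (intro exI[of _ z]) (auto simp: z_def cocycle_adj_def cycle_adj_lin split: if_splits)
qed

lemma cowalk0: "cowalk n 0 x y \<longleftrightarrow> x = y"
  unfolding cowalk_def
  by (auto intro!: exI[of _ "[x]"] simp: length_Suc_conv)

lemma cowalk1: "cowalk n 1 x y \<longleftrightarrow> cocycle_adj n x y"
  unfolding cowalk_def
proof
  assume "\<exists>p. length p = 1 + 1 \<and> p ! 0 = x \<and> p ! 1 = y \<and> (\<forall>i<1. cocycle_adj n (p ! i) (p ! (i + 1)))"
  then show "cocycle_adj n x y" by auto
next
  assume "cocycle_adj n x y"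
  then show "\<exists>p. length p = 1 + 1 \<and> p ! 0 = x \<and> p ! 1 = y \<and> (\<forall>i<1. cocycle_adj n (p ! i) (p ! (i + 1)))"
    by (intro exI[of _ "[x,y]"]) auto
qed

lemma cowalk2: "cocycle_adj n x z \<Longrightarrow> cocycle_adj n z y \<Longrightarrow> cowalk n 2 x y"
  unfolding cowalk_def
  apply (intro exI[of _ "[x,z,y]"])
  apply auto
  by (metis One_nat_def less_2_cases nth_Cons_0 nth_Cons_Suc)

lemma codist_char:
  assumes "n > 5" "x < n" "y < n" "x \<noteq> y"
  shows "codist n x y = (if cocycle_adj n x y then 1 else 2)"
proof (cases "cocycle_adj n x y")
  case True
  have "cowalk n 1 x y" using True cowalk1 by blast
  moreover have "\<not> cowalk n 0 x y" using assms(4) cowalk0 by blast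
  ultimately have "(LEAST k. cowalk n k x y) = 1"
    by (metis (no_types, lifting) Least_equality less_one not_less)
  then show ?thesis using True unfolding codist_def by simp
next
  case False
  then have "cycle_adj n x y" using assms unfolding cocycle_adj_def by auto
  then obtain z where "cocycle_adj n x z" "cocycle_adj n z y" using common_nb assms(1) by blast
  then have "cowalk n 2 x y" by (rule cowalk2)
  moreover have "\<not> cowalk n k x y" if "k < 2" for k
  proof -
    have "k = 0 \<or> k = 1" using that by auto
    then show ?thesis using False assms(4) cowalk0 cowalk1 by auto
  qed
  ultimately show ?thesis using False unfolding codist_def
    by (auto intro!: Least_equality) (meson not_less)
qed

lemma delta_pair_char:
  assumes "n > 5" "x < n" "y < n" "x \<noteq> y" "f x < n" "f y < n" "f x \<noteq> f y"
  shows "delta_pair n f x y = (if cocycle_adj n x y = cocycle_adj n (f x) (f y) then 0 else 1)"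
  unfolding delta_pair_def using codist_char[OF assms(1-4)] codist_char[OF assms(1,5-7)]
  by auto

lemma three_nbrs:
  assumes "n > 2" "cycle_adj n x a" "cycle_adj n x b" "cycle_adj n x c"
  shows "a = b \<or> a = c \<or> b = c"
  using assms unfolding cycle_adj_lin by (auto split: if_splits)

lemma delta_pair_minmax:
  assumes "n > 5" "x < n" "y < n" "x \<noteq> y" "f x < n" "f y < n" "f x \<noteq> f y"
  shows "delta_pair n f (min x y) (max x y) = (if cocycle_adj n x y = cocycle_adj n (f x) (f y) then 0 else 1)"
proof (cases "x < y")
  case True
  then show ?thesis using delta_pair_char[OF assms] by (simp add: min_def max_def)
next
  case False
  then have "min x y = y" "max x y = x" by auto
  have yx: "y \<noteq> x" "f y \<noteq> f x" using assms by auto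
  show ?thesis unfolding \<open>min x y = y\<close> \<open>max x y = x\<close>
    delta_pair_char[OF assms(1,3,2) yx(1) assms(6,5) yx(2)]
    by (simp add: cocycle_sym[of n x y] cocycle_sym[of n "f x" "f y"])
qed

lemma surj_pt:
  fixes f :: "nat \<Rightarrow> nat"
  assumes "bij_betw f {..<n} {..<n}" "c < n"
  shows "\<exists>a<n. f a = c"
proof -
  have im: "f ` {..<n} = {..<n}" using assms(1) by (simp add: bij_betw_def)
  have "c \<in> f ` {..<n}" unfolding im using assms(2) by simp
  then obtain a where "a \<in> {..<n}" "c = f a" by (rule imageE)
  then show ?thesis by auto
qed

lemma nb_ex:
  fixes f :: "nat \<Rightarrow> nat"
  assumes "bij_betw f {..<n} {..<n}" "n > 5" "y < n"
  shows "\<exists>a<n. f a = (if y + 1 = n then 0 else y + 1)" "\<exists>b<n. f b = (if y = 0 then n - 1 else y - 1)"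
proof -
  have "(if y + 1 = n then 0 else y + 1) < n" using assms(2,3) by simp
  then show "\<exists>a<n. f a = (if y + 1 = n then 0 else y + 1)" by (rule surj_pt[OF assms(1)])
  have "(if y = 0 then n - 1 else y - 1) < n" using assms(2,3) by auto
  then show "\<exists>b<n. f b = (if y = 0 then n - 1 else y - 1)" by (rule surj_pt[OF assms(1)])
qed

theorem lemma2p4:
  fixes n :: nat and f :: "nat \<Rightarrow> nat" and u v w :: nat
  assumes "n > 5"
    and "bij_betw f {..<n} {..<n}"
    and "v < n" and "u < n" and "w < n"
    and "u \<noteq> w" and "u \<noteq> v" and "w \<noteq> v"
    and "\<not> cocycle_adj n v u" and "\<not> cocycle_adj n v w"
    and "cocycle_adj n (f v) (f u)" and "cocycle_adj n (f v) (f w)"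
  shows "delta_total n f > 4"
proof -
  have n2: "2 < n" using assms(1) by simp
  have inj: "inj_on f {..<n}" using assms(2) bij_betw_def by blast
  have fr: "\<And>x. x < n \<Longrightarrow> f x < n" using assms(2) bij_betwE by blast
  have finj: "\<And>x y. x < n \<Longrightarrow> y < n \<Longrightarrow> f x = f y \<Longrightarrow> x = y"
    using inj by (meson inj_on_def lessThan_iff)
  have fne: "\<And>x y. x < n \<Longrightarrow> y < n \<Longrightarrow> x \<noteq> y \<Longrightarrow> f x \<noteq> f y" using finj by blast
  have cvu: "cycle_adj n v u" using assms(3,4,7,9) unfolding cocycle_adj_def by auto
  have cvw: "cycle_adj n v w" using assms(3,5,8,10) unfolding cocycle_adj_def by auto
  have nfvu: "\<not> cycle_adj n (f v) (f u)" using assms(11) unfolding cocycle_adj_def by auto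
  have nfvw: "\<not> cycle_adj n (f v) (f w)" using assms(12) unfolding cocycle_adj_def by auto
  have fv: "f v < n" using fr assms(3) by blast
  have fu: "f u < n" using fr assms(4) by blast
  obtain a where a: "a < n" "f a = (if f v + 1 = n then 0 else f v + 1)" using nb_ex[OF assms(2,1) fv] by blast
  obtain b where b: "b < n" "f b = (if f v = 0 then n - 1 else f v - 1)" using nb_ex[OF assms(2,1) fv] by blast
  have cfa: "cycle_adj n (f v) (f a)" using a fv assms(1) unfolding cycle_adj_lin by auto
  have cfb: "cycle_adj n (f v) (f b)" using b fv assms(1) unfolding cycle_adj_lin by auto
  have "f a \<noteq> f b" using a b assms(1) fv by (auto split: if_splits)
  then have ab: "a \<noteq> b" by blast
  have "f a \<noteq> f v" "f b \<noteq> f v" using a b assms(1) fv by (auto split: if_splits)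
  then have av: "a \<noteq> v" and bv: "b \<noteq> v" by auto
  have "a \<noteq> u" "a \<noteq> w" "b \<noteq> u" "b \<noteq> w" using cfa cfb nfvu nfvw by auto
  then have nva: "\<not> cycle_adj n v a" and nvb: "\<not> cycle_adj n v b"
    using three_nbrs[of n v u w a] three_nbrs[of n v u w b] cvu cvw n2 assms(6) by blast+
  have cva: "cocycle_adj n v a" using nva av a assms(3) unfolding cocycle_adj_def by auto
  have cvb: "cocycle_adj n v b" using nvb bv b assms(3) unfolding cocycle_adj_def by auto
  obtain p1 where p1: "p1 < n" "f p1 = (if f u + 1 = n then 0 else f u + 1)" using nb_ex[OF assms(2,1) fu] by blast
  obtain p2 where p2: "p2 < n" "f p2 = (if f u = 0 then n - 1 else f u - 1)" using nb_ex[OF assms(2,1) fu] by blast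
  have cp1: "cycle_adj n (f u) (f p1)" using p1 fu assms(1) unfolding cycle_adj_lin by auto
  have cp2: "cycle_adj n (f u) (f p2)" using p2 fu assms(1) unfolding cycle_adj_lin by auto
  have "f p1 \<noteq> f p2" using p1 p2 assms(1) fu by (auto split: if_splits)
  then have p12: "p1 \<noteq> p2" by blast
  have "f p1 \<noteq> f u" "f p2 \<noteq> f u" using p1 p2 assms(1) fu by (auto split: if_splits)
  then have p1u: "p1 \<noteq> u" and p2u: "p2 \<noteq> u" by auto
  have symc: "\<And>x y. cycle_adj n x y = cycle_adj n y x" unfolding cycle_adj_def by auto
  have "p1 \<noteq> v" "p2 \<noteq> v" using cp1 cp2 nfvu symc by metis+
  then have "\<not> cycle_adj n u p1 \<or> \<not> cycle_adj n u p2"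
    using three_nbrs[of n u v p1 p2] cvu symc[of u v] p12 \<open>p1 \<noteq> v\<close> \<open>p2 \<noteq> v\<close> n2 by blast
  then obtain z where z: "z < n" "z \<noteq> u" "z \<noteq> v" "\<not> cycle_adj n u z" "cycle_adj n (f u) (f z)"
    using p1 p2 p1u p2u cp1 cp2 \<open>p1 \<noteq> v\<close> \<open>p2 \<noteq> v\<close> by blast
  have cuz: "cocycle_adj n u z" using z assms(4) unfolding cocycle_adj_def by auto
  have ncfuz: "\<not> cocycle_adj n (f u) (f z)" using z unfolding cocycle_adj_def by auto
  define sp where "sp = (\<lambda>x y::nat. (min x y, max x y))"
  define P where "P = {(x, y). x < y \<and> y < n}"
  define T where "T = {sp v u, sp v w, sp v a, sp v b, sp u z}"
  have one: "delta_pair n f (min x y) (max x y) = 1"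
    if "x < n" "y < n" "x \<noteq> y" "cocycle_adj n x y \<noteq> cocycle_adj n (f x) (f y)" for x y
    using delta_pair_minmax[OF assms(1) that(1-3) fr[OF that(1)] fr[OF that(2)] fne[OF that(1-3)]] that(4)
    by simp
  have inP: "sp x y \<in> P" if "x < n" "y < n" "x \<noteq> y" for x y
    using that unfolding sp_def P_def by (auto simp: min_def max_def)
  have sp_eq: "sp x y = sp x' y' \<longleftrightarrow> (x = x' \<and> y = y') \<or> (x = y' \<and> y = x')" for x y x' y'
    unfolding sp_def by (auto simp: min_def max_def)
  have TP: "T \<subseteq> P" unfolding T_def using inP assms(3-8) a b z av bv by auto
  have finP: "finite P" unfolding P_def
    by (rule finite_subset[of _ "{..<n} \<times> {..<n}"]) auto
  have ncf: "cocycle_adj n (f v) (f a) = False" "cocycle_adj n (f v) (f b) = False"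
    using cfa cfb unfolding cocycle_adj_def by auto
  have d: "delta_pair n f (min v u) (max v u) = 1" "delta_pair n f (min v w) (max v w) = 1"
    "delta_pair n f (min v a) (max v a) = 1" "delta_pair n f (min v b) (max v b) = 1"
    "delta_pair n f (min u z) (max u z) = 1"
    using one[of v u] assms(3,4,7,9,11) apply blast
    using one[of v w] assms(3,5,8,10,12) apply blast
    using one[of v a] assms(3) a(1) av cva ncf(1) apply blast
    using one[of v b] assms(3) b(1) bv cvb ncf(2) apply blast
    using one[of u z] assms(4) z(1,2) cuz ncfuz by blast
  have Tone: "\<And>t. t \<in> T \<Longrightarrow> (\<lambda>(x, y). delta_pair n f x y) t = 1"
    unfolding T_def sp_def using d by auto
  have cT: "card T = 5" unfolding T_def
    using assms(6-8) ab \<open>a \<noteq> u\<close> \<open>a \<noteq> w\<close> \<open>b \<noteq> u\<close> \<open>b \<noteq> w\<close> av bv z(2,3)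
    by (simp add: sp_eq)
  have "(\<Sum>t\<in>T. (\<lambda>(x, y). delta_pair n f x y) t) \<le> (\<Sum>t\<in>P. (\<lambda>(x, y). delta_pair n f x y) t)"
    by (rule sum_mono2[OF finP TP]) auto
  moreover have "(\<Sum>t\<in>T. (\<lambda>(x, y). delta_pair n f x y) t) = card T"
    using Tone by simp
  ultimately show ?thesis unfolding delta_total_def P_def[symmetric] using cT by simp
qed

end
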